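(* For a restless bandit as in the context, every stationary policy $u$, every $S\subseteq N^{\{0,1\}}$ and every initial state $i\in N$, $$b^u_i+\sum_{j\in S}w^S_j\,x^{0,u}_{ij}=b^S_i+\sum_{j\in N^{\{0,1\}}\setminus S}w^S_j\,x^{1,u}_{ij}.$$
   Context: Restless bandit: finite state space $N=N^{\{0,1\}}\cup N^{\{1\}}$ (disjoint); actions $a\in\{0,1\}$; transition probabilities $p^a_{ij}$ with $p^1_{ij}=p^0_{ij}$ for $i\in N^{\{1\}}$; discount factor $\beta\in(0,1)$; activity weights $\theta^1_j>0$. Stationary policies $u:N\to[0,1]$ (probability of the active action) with $u(i)=1$ on $N^{\{1\}}$. With $X(t),a(t)$ state and action at period $t$: $b^u_i=E^u_i[\sum_{t\ge0}\theta^1_{X(t)}a(t)\beta^t]$, $x^{a,u}_{ij}=E^u_i[\sum_{t\ge0}1\{X(t)=j,a(t)=a\}\beta^t]$. For $S\subseteq N^{\{0,1\}}$ the $S$-active policy is active on $S\cup N^{\{1\}}$ and passive elsewhere; $b^S_i$ its activity measure. Marginal workloads: $w^S_i=\theta^1_i1\{i\in N^{\{0,1\}}\}+\beta\sum_{j\in N}(p^1_{ij}-p^0_{ij})b^S_j$. *)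

theory Defs
  imports Complex_Main
begin

text \<open>State space N (finite), transition kernels p0 (passive) and p1 (active).
A stationary policy u gives the probability u j of choosing the active action in state j.\<close>

fun sdist :: "'s set \<Rightarrow> ('s \<Rightarrow> 's \<Rightarrow> real) \<Rightarrow> ('s \<Rightarrow> 's \<Rightarrow> real) \<Rightarrow> ('s \<Rightarrow> real)
              \<Rightarrow> 's \<Rightarrow> nat \<Rightarrow> 's \<Rightarrow> real" where
  "sdist N p0 p1 u i 0 j = (if j = i then 1 else 0)"
| "sdist N p0 p1 u i (Suc t) j =
     (\<Sum>k\<in>N. sdist N p0 p1 u i t k * (u k * p1 k j + (1 - u k) * p0 k j))"

definition sa_prob :: "'s set \<Rightarrow> ('s \<Rightarrow> 's \<Rightarrow> real) \<Rightarrow> ('s \<Rightarrow> 's \<Rightarrow> real) \<Rightarrow> ('s \<Rightarrow> real)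
              \<Rightarrow> 's \<Rightarrow> nat \<Rightarrow> 's \<Rightarrow> nat \<Rightarrow> real" where
  "sa_prob N p0 p1 u i t j a =
     sdist N p0 p1 u i t j * (if a = 1 then u j else 1 - u j)"

text \<open>x^{a,u}_{ij} = E^u_i[sum_t 1{X(t)=j, a(t)=a} beta^t].\<close>
definition occ :: "'s set \<Rightarrow> ('s \<Rightarrow> 's \<Rightarrow> real) \<Rightarrow> ('s \<Rightarrow> 's \<Rightarrow> real) \<Rightarrow> real
              \<Rightarrow> ('s \<Rightarrow> real) \<Rightarrow> nat \<Rightarrow> 's \<Rightarrow> 's \<Rightarrow> real" where
  "occ N p0 p1 \<beta> u a i j = (\<Sum>t. \<beta> ^ t * sa_prob N p0 p1 u i t j a)"

text \<open>b^u_i = E^u_i[sum_t theta^1_{X(t)} a(t) beta^t].\<close>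
definition act_meas :: "'s set \<Rightarrow> ('s \<Rightarrow> 's \<Rightarrow> real) \<Rightarrow> ('s \<Rightarrow> 's \<Rightarrow> real) \<Rightarrow> real
              \<Rightarrow> ('s \<Rightarrow> real) \<Rightarrow> ('s \<Rightarrow> real) \<Rightarrow> 's \<Rightarrow> real" where
  "act_meas N p0 p1 \<beta> \<theta> u i =
     (\<Sum>t. \<beta> ^ t * (\<Sum>j\<in>N. \<theta> j * sa_prob N p0 p1 u i t j 1))"

definition S_policy :: "'s set \<Rightarrow> 's set \<Rightarrow> 's \<Rightarrow> real" where
  "S_policy N1 S j = (if j \<in> S \<union> N1 then 1 else 0)"

definition workload :: "'s set \<Rightarrow> 's set \<Rightarrow> ('s \<Rightarrow> 's \<Rightarrow> real) \<Rightarrow> ('s \<Rightarrow> 's \<Rightarrow> real) \<Rightarrow> real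
              \<Rightarrow> ('s \<Rightarrow> real) \<Rightarrow> 's set \<Rightarrow> 's \<Rightarrow> real" where
  "workload N01 N1 p0 p1 \<beta> \<theta> S i =
     \<theta> i * (if i \<in> N01 then 1 else 0)
     + \<beta> * (\<Sum>j\<in>N01 \<union> N1. (p1 i j - p0 i j) * act_meas (N01 \<union> N1) p0 p1 \<beta> \<theta> (S_policy N1 S) j)"

end

theory Submission
  imports Defs
begin

lemma sdist_back:
  assumes "i \<in> N" "j \<in> N" "finite N"
  shows "sdist N p0 p1 u i (Suc t) j =
     (\<Sum>k\<in>N. (u i * p1 i k + (1 - u i) * p0 i k) * sdist N p0 p1 u k t j)"
  using assms(2)
proof (induction t arbitrary: j)
  case 0
  then show ?case using assms(1,3)
    by (simp add: if_distrib[of "\<lambda>x. x * _"] if_distrib[of "\<lambda>x. _ * x"] cong: if_cong)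
next
  case (Suc t)
  define P where "P = (\<lambda>k j. u k * p1 k j + (1 - u k) * p0 k j)"
  have "sdist N p0 p1 u i (Suc (Suc t)) j = (\<Sum>k\<in>N. sdist N p0 p1 u i (Suc t) k * P k j)"
    by (simp add: P_def)
  also have "\<dots> = (\<Sum>k\<in>N. (\<Sum>m\<in>N. P i m * sdist N p0 p1 u m t k) * P k j)"
    using Suc.IH by (intro sum.cong) (auto simp: P_def)
  also have "\<dots> = (\<Sum>k\<in>N. \<Sum>m\<in>N. P i m * (sdist N p0 p1 u m t k * P k j))"
    by (simp add: sum_distrib_right mult.assoc)
  also have "\<dots> = (\<Sum>m\<in>N. \<Sum>k\<in>N. P i m * (sdist N p0 p1 u m t k * P k j))"
    by (rule sum.swap)
  also have "\<dots> = (\<Sum>m\<in>N. P i m * (\<Sum>k\<in>N. sdist N p0 p1 u m t k * P k j))"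
    by (simp add: sum_distrib_left)
  also have "\<dots> = (\<Sum>m\<in>N. P i m * sdist N p0 p1 u m (Suc t) j)"
    by (simp add: P_def)
  finally show ?case by (simp add: P_def)
qed

lemma summable_bounded_geom:
  fixes \<beta> :: real
  assumes "0 \<le> \<beta>" "\<beta> < 1" "\<And>t. \<bar>g t\<bar> \<le> C"
  shows "summable (\<lambda>t. \<beta> ^ t * g t)"
proof (rule summable_comparison_test')
  show "summable (\<lambda>t. C * \<beta> ^ t)"
    using assms by (intro summable_mult summable_geometric) auto
  fix n :: nat
  have "\<bar>g n\<bar> * \<beta> ^ n \<le> C * \<beta> ^ n"
    using assms by (intro mult_right_mono) auto
  then show "norm (\<beta> ^ n * g n) \<le> C * \<beta> ^ n"
    using assms by (simp add: abs_mult mult.commute)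
qed

context
  fixes N :: "'s set" and p0 p1 :: "'s \<Rightarrow> 's \<Rightarrow> real" and v :: "'s \<Rightarrow> real"
  assumes finN: "finite N"
    and p0n: "\<And>k j. k \<in> N \<Longrightarrow> j \<in> N \<Longrightarrow> p0 k j \<ge> 0"
    and p1n: "\<And>k j. k \<in> N \<Longrightarrow> j \<in> N \<Longrightarrow> p1 k j \<ge> 0"
    and p0s: "\<And>k. k \<in> N \<Longrightarrow> (\<Sum>j\<in>N. p0 k j) = 1"
    and p1s: "\<And>k. k \<in> N \<Longrightarrow> (\<Sum>j\<in>N. p1 k j) = 1"
    and vr: "\<And>j. j \<in> N \<Longrightarrow> 0 \<le> v j \<and> v j \<le> 1"
begin

lemma sdist_nonneg: "i \<in> N \<Longrightarrow> j \<in> N \<Longrightarrow> 0 \<le> sdist N p0 p1 v i t j"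
proof (induction t arbitrary: j)
  case 0 then show ?case by simp
next
  case (Suc t)
  show ?case
    using Suc vr p0n p1n
    by (auto intro!: sum_nonneg mult_nonneg_nonneg add_nonneg_nonneg)
qed

lemma sdist_sum: "i \<in> N \<Longrightarrow> (\<Sum>j\<in>N. sdist N p0 p1 v i t j) = 1"
proof (induction t)
  case 0 then show ?case using finN by simp
next
  case (Suc t)
  have "(\<Sum>j\<in>N. sdist N p0 p1 v i (Suc t) j)
      = (\<Sum>j\<in>N. \<Sum>k\<in>N. sdist N p0 p1 v i t k * (v k * p1 k j + (1 - v k) * p0 k j))"
    by simp
  also have "\<dots> = (\<Sum>k\<in>N. \<Sum>j\<in>N. sdist N p0 p1 v i t k * (v k * p1 k j + (1 - v k) * p0 k j))"
    by (rule sum.swap)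
  also have "\<dots> = (\<Sum>k\<in>N. sdist N p0 p1 v i t k * (\<Sum>j\<in>N. (v k * p1 k j + (1 - v k) * p0 k j)))"
    by (simp add: sum_distrib_left)
  also have "\<dots> = (\<Sum>k\<in>N. sdist N p0 p1 v i t k)"
    using p0s p1s by (intro sum.cong refl) (simp add: sum.distrib sum_distrib_left[symmetric])
  finally show ?case using Suc by simp
qed

lemma sdist_le1: "i \<in> N \<Longrightarrow> j \<in> N \<Longrightarrow> sdist N p0 p1 v i t j \<le> 1"
proof -
  assume a: "i \<in> N" "j \<in> N"
  have "sdist N p0 p1 v i t j \<le> (\<Sum>j\<in>N. sdist N p0 p1 v i t j)"
    using a finN sdist_nonneg by (intro member_le_sum) auto
  then show ?thesis using sdist_sum a by simp
qed

lemma sa_bound: "i \<in> N \<Longrightarrow> j \<in> N \<Longrightarrow> a \<in> {0,1} \<Longrightarrow> \<bar>sa_prob N p0 p1 v i t j a\<bar> \<le> 1"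
proof -
  assume a: "i \<in> N" "j \<in> N" "a \<in> {0,1}"
  have "0 \<le> sdist N p0 p1 v i t j" "sdist N p0 p1 v i t j \<le> 1"
    using a sdist_nonneg sdist_le1 by auto
  moreover have "0 \<le> (if a = 1 then v j else 1 - v j)" "(if a = 1 then v j else 1 - v j) \<le> 1"
    using vr[OF a(2)] by auto
  ultimately show ?thesis unfolding sa_prob_def
    by (simp add: abs_mult mult_le_one)
qed

lemma sa_summable:
  fixes \<beta> :: real
  assumes "0 \<le> \<beta>" "\<beta> < 1" "i \<in> N" "j \<in> N" "a \<in> {0,1}"
  shows "summable (\<lambda>t. \<beta> ^ t * sa_prob N p0 p1 v i t j a)"
  using assms sa_bound by (intro summable_bounded_geom[where C=1]) auto

lemma f_summable:
  fixes \<beta> :: real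
  assumes "0 \<le> \<beta>" "\<beta> < 1" "i \<in> N"
  shows "summable (\<lambda>t. \<beta> ^ t * (\<Sum>j\<in>N. \<theta> j * sa_prob N p0 p1 v i t j 1))"
proof (rule summable_bounded_geom[where C="\<Sum>j\<in>N. \<bar>\<theta> j\<bar>"])
  fix t
  have "\<bar>\<Sum>j\<in>N. \<theta> j * sa_prob N p0 p1 v i t j 1\<bar> \<le> (\<Sum>j\<in>N. \<bar>\<theta> j * sa_prob N p0 p1 v i t j 1\<bar>)"
    by (rule sum_abs)
  also have "\<dots> \<le> (\<Sum>j\<in>N. \<bar>\<theta> j\<bar>)"
  proof (intro sum_mono)
    fix j assume "j \<in> N"
    then have "\<bar>sa_prob N p0 p1 v i t j 1\<bar> \<le> 1" using sa_bound assms by auto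
    then have "\<bar>\<theta> j\<bar> * \<bar>sa_prob N p0 p1 v i t j 1\<bar> \<le> \<bar>\<theta> j\<bar> * 1"
      by (intro mult_left_mono) auto
    then show "\<bar>\<theta> j * sa_prob N p0 p1 v i t j 1\<bar> \<le> \<bar>\<theta> j\<bar>" by (simp add: abs_mult)
  qed
  finally show "\<bar>\<Sum>j\<in>N. \<theta> j * sa_prob N p0 p1 v i t j 1\<bar> \<le> (\<Sum>j\<in>N. \<bar>\<theta> j\<bar>)" .
qed (use assms in auto)

lemma bellman:
  fixes \<beta> :: real
  assumes "0 \<le> \<beta>" "\<beta> < 1" "i \<in> N"
  shows "act_meas N p0 p1 \<beta> \<theta> v i = \<theta> i * v i
     + \<beta> * (\<Sum>k\<in>N. (v i * p1 i k + (1 - v i) * p0 i k) * act_meas N p0 p1 \<beta> \<theta> v k)"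
proof -
  define f where "f k t = (\<Sum>j\<in>N. \<theta> j * sa_prob N p0 p1 v k t j 1)" for k t
  define P where "P k = v i * p1 i k + (1 - v i) * p0 i k" for k
  have sf: "k \<in> N \<Longrightarrow> summable (\<lambda>t. \<beta> ^ t * f k t)" for k
    unfolding f_def using f_summable assms by auto
  have f0: "f i 0 = \<theta> i * v i"
    using assms finN by (simp add: f_def sa_prob_def if_distrib[of "\<lambda>x. x * _"] if_distrib[of "\<lambda>x. _ * x"] cong: if_cong)
  have fS: "f i (Suc t) = (\<Sum>k\<in>N. P k * f k t)" for t
  proof -
    have "f i (Suc t) = (\<Sum>j\<in>N. \<theta> j * ((\<Sum>k\<in>N. P k * sdist N p0 p1 v k t j) * v j))"
      unfolding f_def sa_prob_def P_def using assms
      by (intro sum.cong refl) (simp del: sdist.simps add: sdist_back[OF assms(3) _ finN])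
    also have "\<dots> = (\<Sum>j\<in>N. \<Sum>k\<in>N. P k * (\<theta> j * (sdist N p0 p1 v k t j * v j)))"
      by (simp add: sum_distrib_left sum_distrib_right algebra_simps)
    also have "\<dots> = (\<Sum>k\<in>N. \<Sum>j\<in>N. P k * (\<theta> j * (sdist N p0 p1 v k t j * v j)))"
      by (rule sum.swap)
    also have "\<dots> = (\<Sum>k\<in>N. P k * f k t)"
      unfolding f_def sa_prob_def
      by (simp add: sum_distrib_left algebra_simps)
    finally show ?thesis .
  qed
  have "act_meas N p0 p1 \<beta> \<theta> v i = (\<Sum>t. \<beta> ^ t * f i t)"
    by (simp add: act_meas_def f_def)
  also have "\<dots> = \<beta> ^ 0 * f i 0 + (\<Sum>t. \<beta> ^ Suc t * f i (Suc t))"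
    using suminf_split_head[OF sf[OF assms(3)]] by simp
  also have "(\<Sum>t. \<beta> ^ Suc t * f i (Suc t)) = (\<Sum>t. \<beta> * (\<Sum>k\<in>N. P k * (\<beta> ^ t * f k t)))"
    by (simp add: fS sum_distrib_left algebra_simps)
  also have "\<dots> = \<beta> * (\<Sum>t. (\<Sum>k\<in>N. P k * (\<beta> ^ t * f k t)))"
    using sf by (intro suminf_mult summable_sum summable_mult) auto
  also have "(\<Sum>t. (\<Sum>k\<in>N. P k * (\<beta> ^ t * f k t))) = (\<Sum>k\<in>N. (\<Sum>t. P k * (\<beta> ^ t * f k t)))"
    using sf by (intro suminf_sum summable_mult) auto
  also have "\<dots> = (\<Sum>k\<in>N. P k * (\<Sum>t. \<beta> ^ t * f k t))"
    using sf by (intro sum.cong refl suminf_mult) auto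
  finally have X: "act_meas N p0 p1 \<beta> \<theta> v i = \<beta> ^ 0 * f i 0 + \<beta> * (\<Sum>k\<in>N. P k * (\<Sum>t. \<beta> ^ t * f k t))" .
  have am: "\<And>k. act_meas N p0 p1 \<beta> \<theta> v k = (\<Sum>t. \<beta> ^ t * f k t)"
    by (simp add: act_meas_def f_def)
  show ?thesis using X by (simp only: am f0 P_def) simp
qed

end

theorem proposition4:
  fixes N01 N1 :: "'s set" and p0 p1 :: "'s \<Rightarrow> 's \<Rightarrow> real" and \<beta> :: real
    and \<theta> :: "'s \<Rightarrow> real" and u :: "'s \<Rightarrow> real" and S :: "'s set" and i :: 's
  assumes fin: "finite (N01 \<union> N1)"
    and disj: "N01 \<inter> N1 = {}"
    and p0_nonneg: "\<And>k j. k \<in> N01 \<union> N1 \<Longrightarrow> j \<in> N01 \<union> N1 \<Longrightarrow> p0 k j \<ge> 0"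
    and p1_nonneg: "\<And>k j. k \<in> N01 \<union> N1 \<Longrightarrow> j \<in> N01 \<union> N1 \<Longrightarrow> p1 k j \<ge> 0"
    and p0_stoch: "\<And>k. k \<in> N01 \<union> N1 \<Longrightarrow> (\<Sum>j\<in>N01 \<union> N1. p0 k j) = 1"
    and p1_stoch: "\<And>k. k \<in> N01 \<union> N1 \<Longrightarrow> (\<Sum>j\<in>N01 \<union> N1. p1 k j) = 1"
    and p_N1: "\<And>k j. k \<in> N1 \<Longrightarrow> j \<in> N01 \<union> N1 \<Longrightarrow> p1 k j = p0 k j"
    and beta: "0 < \<beta>" "\<beta> < 1"
    and theta_pos: "\<And>j. j \<in> N01 \<union> N1 \<Longrightarrow> \<theta> j > 0"
    and u_range: "\<And>j. j \<in> N01 \<union> N1 \<Longrightarrow> 0 \<le> u j \<and> u j \<le> 1"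
    and u_N1: "\<And>j. j \<in> N1 \<Longrightarrow> u j = 1"
    and S_sub: "S \<subseteq> N01"
    and i_in: "i \<in> N01 \<union> N1"
  shows "act_meas (N01 \<union> N1) p0 p1 \<beta> \<theta> u i
           + (\<Sum>j\<in>S. workload N01 N1 p0 p1 \<beta> \<theta> S j * occ (N01 \<union> N1) p0 p1 \<beta> u 0 i j)
         = act_meas (N01 \<union> N1) p0 p1 \<beta> \<theta> (S_policy N1 S) i
           + (\<Sum>j\<in>N01 - S. workload N01 N1 p0 p1 \<beta> \<theta> S j * occ (N01 \<union> N1) p0 p1 \<beta> u 1 i j)"
  proof -
  define N where "N = N01 \<union> N1"
  define s where "s = S_policy N1 S"
  define b where "b k = act_meas N p0 p1 \<beta> \<theta> s k" for k
  define w where "w k = workload N01 N1 p0 p1 \<beta> \<theta> S k" for k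
  define x where "x a k = occ N p0 p1 \<beta> u a i k" for a k
  define sd where "sd t k = sdist N p0 p1 u i t k" for t k
  define c1 where "c1 k = b k - \<beta> * (\<Sum>j\<in>N. p1 k j * b j)" for k
  define c0 where "c0 k = b k - \<beta> * (\<Sum>j\<in>N. p0 k j * b j)" for k
  define D where "D t = (\<Sum>k\<in>N. sd t k * b k)" for t
  have finN: "finite N" using fin by (simp add: N_def)
  have iN: "i \<in> N" using i_in by (simp add: N_def)
  have p0n: "\<And>k j. k \<in> N \<Longrightarrow> j \<in> N \<Longrightarrow> p0 k j \<ge> 0" using p0_nonneg by (simp add: N_def)
  have p1n: "\<And>k j. k \<in> N \<Longrightarrow> j \<in> N \<Longrightarrow> p1 k j \<ge> 0" using p1_nonneg by (simp add: N_def)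
  have p0s: "\<And>k. k \<in> N \<Longrightarrow> (\<Sum>j\<in>N. p0 k j) = 1" using p0_stoch by (simp add: N_def)
  have p1s: "\<And>k. k \<in> N \<Longrightarrow> (\<Sum>j\<in>N. p1 k j) = 1" using p1_stoch by (simp add: N_def)
  have ur: "\<And>j. j \<in> N \<Longrightarrow> 0 \<le> u j \<and> u j \<le> 1" using u_range by (simp add: N_def)
  have sr: "\<And>j. j \<in> N \<Longrightarrow> 0 \<le> s j \<and> s j \<le> 1" by (simp add: s_def S_policy_def)
  have b0: "0 \<le> \<beta>" using beta by simp
  note ctxu = finN p0n p1n p0s p1s ur
  note ctxs = finN p0n p1n p0s p1s sr
  have bell: "b k = \<theta> k * s k + \<beta> * (\<Sum>j\<in>N. (s k * p1 k j + (1 - s k) * p0 k j) * b j)"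
    if "k \<in> N" for k
    unfolding b_def by (rule bellman[OF ctxs b0 beta(2) that])
  have sa_sum: "summable (\<lambda>t. \<beta> ^ t * sa_prob N p0 p1 u i t k a)" if "k \<in> N" "a \<in> {0,1}" for k a
    by (rule sa_summable[OF ctxu b0 beta(2) iN that])
  define B where "B = (\<Sum>k\<in>N. \<bar>b k\<bar>)"
  have Dbound: "\<bar>D t\<bar> \<le> B" for t
  proof -
    have "\<bar>D t\<bar> \<le> (\<Sum>k\<in>N. \<bar>sd t k * b k\<bar>)" unfolding D_def by (rule sum_abs)
    also have "\<dots> \<le> B" unfolding B_def
    proof (intro sum_mono)
      fix k assume k: "k \<in> N"
      have "0 \<le> sd t k" "sd t k \<le> 1"
        using sdist_nonneg[OF ctxu iN k] sdist_le1[OF ctxu iN k] by (auto simp: sd_def)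
      then have "\<bar>sd t k\<bar> * \<bar>b k\<bar> \<le> 1 * \<bar>b k\<bar>" by (intro mult_right_mono) auto
      then show "\<bar>sd t k * b k\<bar> \<le> \<bar>b k\<bar>" by (simp add: abs_mult)
    qed
    finally show ?thesis .
  qed
  have lim: "(\<lambda>n. \<beta> ^ n * D n) \<longlonglongrightarrow> 0"
  proof (rule tendsto_sandwich[where f="\<lambda>n. - (B * \<beta> ^ n)" and h="\<lambda>n. B * \<beta> ^ n"])
    have g: "(\<lambda>n. B * \<beta> ^ n) \<longlonglongrightarrow> B * 0"
      using beta by (intro tendsto_mult tendsto_const LIMSEQ_power_zero) auto
    then show "(\<lambda>n. B * \<beta> ^ n) \<longlonglongrightarrow> 0" by simp
    show "(\<lambda>n. - (B * \<beta> ^ n)) \<longlonglongrightarrow> 0" using tendsto_minus[OF g] by simp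
    show "\<forall>\<^sub>F n in sequentially. - (B * \<beta> ^ n) \<le> \<beta> ^ n * D n"
    proof (intro always_eventually allI)
      fix n
      have "\<beta> ^ n * (- B) \<le> \<beta> ^ n * D n" using Dbound[of n] b0
        by (intro mult_left_mono) auto
      then show "- (B * \<beta> ^ n) \<le> \<beta> ^ n * D n" by (simp add: algebra_simps)
    qed
    show "\<forall>\<^sub>F n in sequentially. \<beta> ^ n * D n \<le> B * \<beta> ^ n"
    proof (intro always_eventually allI)
      fix n
      have "\<beta> ^ n * D n \<le> \<beta> ^ n * B" using Dbound[of n] b0
        by (intro mult_left_mono) auto
      then show "\<beta> ^ n * D n \<le> B * \<beta> ^ n" by (simp add: algebra_simps)
    qed
  qed
  have tel: "(\<lambda>n. \<beta> ^ n * D n - \<beta> ^ Suc n * D (Suc n)) sums (\<beta> ^ 0 * D 0 - 0)"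
    using telescope_sums'[OF lim] by simp
  have D0: "D 0 = b i" using iN finN
    by (simp add: D_def sd_def if_distrib[of "\<lambda>x. x * _"] cong: if_cong)
  have DS: "D (Suc t) = (\<Sum>k\<in>N. sd t k * (\<Sum>j\<in>N. (u k * p1 k j + (1 - u k) * p0 k j) * b j))" for t
  proof -
    have "D (Suc t) = (\<Sum>j\<in>N. \<Sum>k\<in>N. sd t k * ((u k * p1 k j + (1 - u k) * p0 k j) * b j))"
      by (simp add: D_def sd_def sum_distrib_right mult.assoc)
    also have "\<dots> = (\<Sum>k\<in>N. \<Sum>j\<in>N. sd t k * ((u k * p1 k j + (1 - u k) * p0 k j) * b j))"
      by (rule sum.swap)
    also have "\<dots> = (\<Sum>k\<in>N. sd t k * (\<Sum>j\<in>N. (u k * p1 k j + (1 - u k) * p0 k j) * b j))"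
      by (simp add: sum_distrib_left)
    finally show ?thesis .
  qed
  have trm: "\<beta> ^ n * D n - \<beta> ^ Suc n * D (Suc n) =
     (\<Sum>k\<in>N. c1 k * (\<beta> ^ n * sa_prob N p0 p1 u i n k 1) + c0 k * (\<beta> ^ n * sa_prob N p0 p1 u i n k 0))" for n
  proof -
    have e: "(\<Sum>j\<in>N. (u k * p1 k j + (1 - u k) * p0 k j) * b j)
        = u k * (\<Sum>j\<in>N. p1 k j * b j) + (1 - u k) * (\<Sum>j\<in>N. p0 k j * b j)" for k
    proof -
      have "(\<Sum>j\<in>N. (u k * p1 k j + (1 - u k) * p0 k j) * b j)
          = (\<Sum>j\<in>N. u k * (p1 k j * b j) + (1 - u k) * (p0 k j * b j))"
        by (intro sum.cong refl) (simp add: algebra_simps)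
      also have "\<dots> = u k * (\<Sum>j\<in>N. p1 k j * b j) + (1 - u k) * (\<Sum>j\<in>N. p0 k j * b j)"
        by (simp only: sum.distrib sum_distrib_left)
      finally show ?thesis .
    qed
    have "\<beta> ^ n * D n - \<beta> ^ Suc n * D (Suc n) = \<beta> ^ n * (D n - \<beta> * D (Suc n))"
      by (simp add: algebra_simps)
    also have "D n - \<beta> * D (Suc n) = (\<Sum>k\<in>N. sd n k * b k - \<beta> * (sd n k * (u k * (\<Sum>j\<in>N. p1 k j * b j) + (1 - u k) * (\<Sum>j\<in>N. p0 k j * b j))))"
    proof -
      have "D n - \<beta> * D (Suc n) = (\<Sum>k\<in>N. sd n k * b k) - \<beta> * (\<Sum>k\<in>N. sd n k * (u k * (\<Sum>j\<in>N. p1 k j * b j) + (1 - u k) * (\<Sum>j\<in>N. p0 k j * b j)))"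
        by (simp only: DS e) (simp only: D_def)
      then show ?thesis by (simp only: sum_subtractf sum_distrib_left)
    qed
    also have "\<dots> = (\<Sum>k\<in>N. c1 k * (sd n k * u k) + c0 k * (sd n k * (1 - u k)))"
      by (intro sum.cong refl) (simp add: c1_def c0_def algebra_simps)
    finally show ?thesis
      by (simp add: sum_distrib_left sd_def sa_prob_def algebra_simps)
  qed
  have bi: "b i = (\<Sum>k\<in>N. c1 k * x 1 k + c0 k * x 0 k)"
  proof -
    have "b i = (\<Sum>n. \<Sum>k\<in>N. c1 k * (\<beta> ^ n * sa_prob N p0 p1 u i n k 1) + c0 k * (\<beta> ^ n * sa_prob N p0 p1 u i n k 0))"
    proof -
      have "(\<lambda>n. \<Sum>k\<in>N. c1 k * (\<beta> ^ n * sa_prob N p0 p1 u i n k 1) + c0 k * (\<beta> ^ n * sa_prob N p0 p1 u i n k 0)) sums (b i)"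
        using tel D0 by (simp only: trm) simp
      then show ?thesis by (simp add: sums_iff)
    qed
    also have "\<dots> = (\<Sum>k\<in>N. \<Sum>n. c1 k * (\<beta> ^ n * sa_prob N p0 p1 u i n k 1) + c0 k * (\<beta> ^ n * sa_prob N p0 p1 u i n k 0))"
      using sa_sum by (intro suminf_sum summable_add summable_mult) auto
    also have "\<dots> = (\<Sum>k\<in>N. c1 k * x 1 k + c0 k * x 0 k)"
    proof (intro sum.cong refl)
      fix k assume k: "k \<in> N"
      have s1: "summable (\<lambda>n. c1 k * (\<beta> ^ n * sa_prob N p0 p1 u i n k 1))"
        using sa_sum k by (intro summable_mult) auto
      have s0: "summable (\<lambda>n. c0 k * (\<beta> ^ n * sa_prob N p0 p1 u i n k 0))"
        using sa_sum k by (intro summable_mult) auto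
      show "(\<Sum>n. c1 k * (\<beta> ^ n * sa_prob N p0 p1 u i n k 1) + c0 k * (\<beta> ^ n * sa_prob N p0 p1 u i n k 0))
          = c1 k * x 1 k + c0 k * x 0 k"
        using suminf_add[OF s1 s0] sa_sum k
        by (simp add: x_def occ_def suminf_mult)
    qed
    finally show ?thesis .
  qed
  have au: "act_meas N p0 p1 \<beta> \<theta> u i = (\<Sum>k\<in>N. \<theta> k * x 1 k)"
  proof -
    have "act_meas N p0 p1 \<beta> \<theta> u i = (\<Sum>t. \<Sum>k\<in>N. \<theta> k * (\<beta> ^ t * sa_prob N p0 p1 u i t k 1))"
      by (simp add: act_meas_def sum_distrib_left algebra_simps)
    also have "\<dots> = (\<Sum>k\<in>N. \<Sum>t. \<theta> k * (\<beta> ^ t * sa_prob N p0 p1 u i t k 1))"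
      using sa_sum by (intro suminf_sum summable_mult) auto
    also have "\<dots> = (\<Sum>k\<in>N. \<theta> k * x 1 k)"
      using sa_sum by (intro sum.cong refl) (simp add: x_def occ_def suminf_mult)
    finally show ?thesis .
  qed
  have wk: "w k = \<theta> k + \<beta> * ((\<Sum>j\<in>N. p1 k j * b j) - (\<Sum>j\<in>N. p0 k j * b j))" if "k \<in> N01" for k
    using that by (simp add: w_def workload_def b_def s_def N_def sum_subtractf[symmetric] left_diff_distrib)
  have x0N1: "x 0 k = 0" if "k \<in> N1" for k
    using that u_N1 by (simp add: x_def occ_def sa_prob_def)
  have pk: "c1 k * x 1 k + c0 k * x 0 k = \<theta> k * x 1 k + (if k \<in> S then w k * x 0 k else 0)
      - (if k \<in> N01 - S then w k * x 1 k else 0)" if k: "k \<in> N" for k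
  proof (cases "k \<in> S \<union> N1")
    case True
    then have sk: "s k = 1" by (simp add: s_def S_policy_def)
    have bk: "b k = \<theta> k + \<beta> * (\<Sum>j\<in>N. p1 k j * b j)"
      using bell[OF k] by (simp add: sk)
    show ?thesis
    proof (cases "k \<in> S")
      case True
      then have "k \<in> N01" using S_sub by auto
      then have "c1 k = \<theta> k" "c0 k = w k" using bk wk[of k]
        by (simp_all add: c1_def c0_def right_diff_distrib)
      then show ?thesis using True by simp
    next
      case False
      then have "k \<in> N1" "k \<notin> N01" using \<open>k \<in> S \<union> N1\<close> disj by auto
      moreover have "c1 k = \<theta> k" using bk by (simp add: c1_def)
      ultimately show ?thesis using False x0N1[of k] by simp
    qed
  next
    case False
    then have kk: "k \<in> N01 - S" using k by (auto simp: N_def)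
    then have sk: "s k = 0" using False by (simp add: s_def S_policy_def)
    have bk: "b k = \<beta> * (\<Sum>j\<in>N. p0 k j * b j)"
      using bell[OF k] by (simp add: sk)
    have "c1 k = \<theta> k - w k" "c0 k = 0" using bk wk[of k] kk
      by (simp_all add: c1_def c0_def right_diff_distrib)
    then show ?thesis using kk by (simp add: left_diff_distrib)
  qed
  have "b i = (\<Sum>k\<in>N. \<theta> k * x 1 k) + (\<Sum>k\<in>N. if k \<in> S then w k * x 0 k else 0)
      - (\<Sum>k\<in>N. if k \<in> N01 - S then w k * x 1 k else 0)"
  proof -
    have "b i = (\<Sum>k\<in>N. \<theta> k * x 1 k + (if k \<in> S then w k * x 0 k else 0)
      - (if k \<in> N01 - S then w k * x 1 k else 0))"
      unfolding bi by (intro sum.cong refl pk)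
    then show ?thesis by (simp only: sum.distrib sum_subtractf)
  qed
  also have "(\<Sum>k\<in>N. if k \<in> S then w k * x 0 k else 0) = (\<Sum>k\<in>S. w k * x 0 k)"
  proof -
    have "N \<inter> S = S" using S_sub by (auto simp: N_def)
    then show ?thesis using sum.inter_restrict[OF finN, of "\<lambda>k. w k * x 0 k" S] by simp
  qed
  also have "(\<Sum>k\<in>N. if k \<in> N01 - S then w k * x 1 k else 0) = (\<Sum>k\<in>N01 - S. w k * x 1 k)"
  proof -
    have "N \<inter> (N01 - S) = N01 - S" by (auto simp: N_def)
    then show ?thesis using sum.inter_restrict[OF finN, of "\<lambda>k. w k * x 1 k" "N01 - S"] by simp
  qed
  finally have "b i = act_meas N p0 p1 \<beta> \<theta> u i + (\<Sum>k\<in>S. w k * x 0 k) - (\<Sum>k\<in>N01 - S. w k * x 1 k)"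
    using au by simp
  then show ?thesis by (simp add: b_def w_def x_def N_def s_def)
qed

end
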